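(* Let $\|f^{(\beta_* )}\|<\infty$ for some $\beta_*>1$, $\hat\beta_*=\beta_*\wedge1.5$, $\varepsilon\in(0,1)$ with $N_\varepsilon=\lfloor(\varepsilon^2\log\varepsilon^{-5})^{-1/(2\beta_*+1)}\rfloor\ge1$, and let $h\in[0,1]^{N_\varepsilon}$ (possibly random). Let $\hat X=\max_{1\le k\le N_\varepsilon}\sqrt{\xi_k(\vartheta)^2+\xi_k^*(\vartheta)^2}$. Then, almost surely, for all $\tau$ with $4\pi|\tau-\vartheta|\le N_\varepsilon^{-1}$, $$\Big|\Phi_\varepsilon''(\tau,h)+\sum_{k=1}^{N_\varepsilon}(2\pi k)^2h_kf_k^2\Big|\le N_\varepsilon^{2-2\hat\beta_*}\Big(\|f^{(\beta_* )}\|+\frac{2\pi\hat X}{\sqrt{\log\varepsilon^{-5}}}\Big)^2.$$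
   Context: Model: $\vartheta\in\mathbb R$, $f$ locally square integrable, even, $1$-periodic; $f_k=\sqrt2\int_{-1/2}^{1/2}\cos(2\pi kt)f(t)dt$, $\|f^{(\beta)}\|^2=\sum_{k\ge1}(2\pi k)^{2\beta}f_k^2$. Observations $x_k=f_k\cos(2\pi k\vartheta)+\varepsilon\xi_k$, $x_k^*=f_k\sin(2\pi k\vartheta)+\varepsilon\xi_k^*$, $\xi_k,\xi_k^*$ i.i.d. $\mathcal N(0,1)$. Define $\xi_k(\vartheta)=\xi_k\cos(2\pi k\vartheta)+\xi_k^*\sin(2\pi k\vartheta)$, $\xi^*_k(\vartheta)=\xi_k^*\cos(2\pi k\vartheta)-\xi_k\sin(2\pi k\vartheta)$ (so that $x_k\cos(2\pi k\vartheta)+x_k^*\sin(2\pi k\vartheta)=f_k+\varepsilon\xi_k(\vartheta)$ and $x_k^*\cos(2\pi k\vartheta)-x_k\sin(2\pi k\vartheta)=\varepsilon\xi_k^*(\vartheta)$). $h\in[0,1]^N$ extended by $0$; $\Phi_\varepsilon(\tau,h)=\frac12\sum_kh_k(x_k\cos(2\pi k\tau)+x_k^*\sin(2\pi k\tau))^2$, $\Phi''_\varepsilon$ its second derivative in $\tau$. *)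

theory Defs
  imports "HOL-Analysis.Analysis"
begin

definition fcoef :: "(real \<Rightarrow> real) \<Rightarrow> nat \<Rightarrow> real" where
  "fcoef f k = sqrt 2 * (LBINT t=-(1/2)..1/2. cos (2*pi*real k*t) * f t)"

text \<open>Squared Sobolev-type norm: sum over k >= 1 of (2 pi k)^(2 beta) f_k^2
  (the k = 0 term vanishes since 0 powr a = 0).\<close>
definition sob_sq :: "real \<Rightarrow> (real \<Rightarrow> real) \<Rightarrow> real" where
  "sob_sq \<beta> f = (\<Sum>k. (2*pi*real k) powr (2*\<beta>) * (fcoef f k)^2)"

definition sob_finite :: "real \<Rightarrow> (real \<Rightarrow> real) \<Rightarrow> bool" where
  "sob_finite \<beta> f \<longleftrightarrow> summable (\<lambda>k. (2*pi*real k) powr (2*\<beta>) * (fcoef f k)^2)"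

definition sob_norm :: "real \<Rightarrow> (real \<Rightarrow> real) \<Rightarrow> real" where
  "sob_norm \<beta> f = sqrt (sob_sq \<beta> f)"

definition obs :: "(real \<Rightarrow> real) \<Rightarrow> real \<Rightarrow> real \<Rightarrow> (nat \<Rightarrow> real) \<Rightarrow> nat \<Rightarrow> real" where
  "obs f \<theta> \<epsilon> \<xi> k = fcoef f k * cos (2*pi*real k*\<theta>) + \<epsilon> * \<xi> k"

definition obs_star :: "(real \<Rightarrow> real) \<Rightarrow> real \<Rightarrow> real \<Rightarrow> (nat \<Rightarrow> real) \<Rightarrow> nat \<Rightarrow> real" where
  "obs_star f \<theta> \<epsilon> \<xi>s k = fcoef f k * sin (2*pi*real k*\<theta>) + \<epsilon> * \<xi>s k"

definition xi_rot :: "(nat \<Rightarrow> real) \<Rightarrow> (nat \<Rightarrow> real) \<Rightarrow> real \<Rightarrow> nat \<Rightarrow> real" where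
  "xi_rot \<xi> \<xi>s \<theta> k = \<xi> k * cos (2*pi*real k*\<theta>) + \<xi>s k * sin (2*pi*real k*\<theta>)"

definition xi_rot_star :: "(nat \<Rightarrow> real) \<Rightarrow> (nat \<Rightarrow> real) \<Rightarrow> real \<Rightarrow> nat \<Rightarrow> real" where
  "xi_rot_star \<xi> \<xi>s \<theta> k = \<xi>s k * cos (2*pi*real k*\<theta>) - \<xi> k * sin (2*pi*real k*\<theta>)"

definition Phi :: "(real \<Rightarrow> real) \<Rightarrow> real \<Rightarrow> real \<Rightarrow> (nat \<Rightarrow> real) \<Rightarrow> (nat \<Rightarrow> real)
                  \<Rightarrow> nat \<Rightarrow> (nat \<Rightarrow> real) \<Rightarrow> real \<Rightarrow> real" where
  "Phi f \<theta> \<epsilon> \<xi> \<xi>s N h \<tau> = (1/2) * (\<Sum>k\<in>{1..N}. h k *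
      (obs f \<theta> \<epsilon> \<xi> k * cos (2*pi*real k*\<tau>) + obs_star f \<theta> \<epsilon> \<xi>s k * sin (2*pi*real k*\<tau>))^2)"

definition N_eps :: "real \<Rightarrow> real \<Rightarrow> nat" where
  "N_eps \<beta> \<epsilon> = nat \<lfloor>(\<epsilon>^2 * ln (1 / \<epsilon>^5)) powr (-1 / (2*\<beta> + 1))\<rfloor>"

end

theory Submission
  imports Defs
begin

lemma d1:
  fixes A B hh :: "nat \<Rightarrow> real"
  shows "((\<lambda>t. (1/2) * (\<Sum>k\<in>{1..N}. hh k * (A k * cos (2*pi*real k*t) + B k * sin (2*pi*real k*t))^2))
     has_real_derivative (\<Sum>k\<in>{1..N}. hh k * (A k * cos (2*pi*real k*t) + B k * sin (2*pi*real k*t)) *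
        ((2*pi*real k) * (B k * cos (2*pi*real k*t) - A k * sin (2*pi*real k*t))))) (at t)"
proof -
  have "((\<lambda>t. (\<Sum>k\<in>{1..N}. hh k * (A k * cos (2*pi*real k*t) + B k * sin (2*pi*real k*t))^2))
     has_real_derivative (\<Sum>k\<in>{1..N}. hh k * (2 * (A k * cos (2*pi*real k*t) + B k * sin (2*pi*real k*t)) *
        ((2*pi*real k) * (B k * cos (2*pi*real k*t) - A k * sin (2*pi*real k*t)))))) (at t)"
    apply (rule DERIV_sum)
    apply (rule derivative_eq_intros refl | simp)+
    apply (simp add: algebra_simps)
    done
  from DERIV_cmult[OF this, of "1/2"] show ?thesis
    by (simp add: sum_distrib_left algebra_simps)
qed

lemma d2:
  fixes A B hh :: "nat \<Rightarrow> real"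
  shows "((\<lambda>t. (\<Sum>k\<in>{1..N}. hh k * (A k * cos (2*pi*real k*t) + B k * sin (2*pi*real k*t)) *
        ((2*pi*real k) * (B k * cos (2*pi*real k*t) - A k * sin (2*pi*real k*t)))))
     has_real_derivative (\<Sum>k\<in>{1..N}. hh k * (2*pi*real k)^2 * ((B k * cos (2*pi*real k*t) - A k * sin (2*pi*real k*t))^2
        - (A k * cos (2*pi*real k*t) + B k * sin (2*pi*real k*t))^2))) (at t)"
    apply (rule DERIV_sum)
    apply (rule derivative_eq_intros refl | simp)+
    apply (simp add: algebra_simps power2_eq_square)
    done

lemma dd:
  fixes A B hh :: "nat \<Rightarrow> real"
  shows "deriv (deriv (\<lambda>t. (1/2) * (\<Sum>k\<in>{1..N}. hh k * (A k * cos (2*pi*real k*t) + B k * sin (2*pi*real k*t))^2))) \<tau>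
    = (\<Sum>k\<in>{1..N}. hh k * (2*pi*real k)^2 * ((B k * cos (2*pi*real k*\<tau>) - A k * sin (2*pi*real k*\<tau>))^2
        - (A k * cos (2*pi*real k*\<tau>) + B k * sin (2*pi*real k*\<tau>))^2))"
proof -
  have "deriv (\<lambda>t. (1/2) * (\<Sum>k\<in>{1..N}. hh k * (A k * cos (2*pi*real k*t) + B k * sin (2*pi*real k*t))^2))
     = (\<lambda>t. (\<Sum>k\<in>{1..N}. hh k * (A k * cos (2*pi*real k*t) + B k * sin (2*pi*real k*t)) *
        ((2*pi*real k) * (B k * cos (2*pi*real k*t) - A k * sin (2*pi*real k*t)))))"
    by (rule ext, rule DERIV_imp_deriv, rule d1)
  then show ?thesis using DERIV_imp_deriv[OF d2] by simp
qed


lemma pw: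
  fixes f e xr xs c sn :: real
  assumes cs: "c^2 + sn^2 = 1" and e: "e \<ge> 0"
  shows "\<bar>f^2 + ((e*xs) * c - (f + e*xr) * sn)^2 - ((f + e*xr) * c + (e*xs) * sn)^2\<bar>
     \<le> 2*f^2* sn^2 + 2*e*\<bar>f\<bar> * sqrt (xr^2+xs^2) + e^2*(xr^2+xs^2)"
proof -
  define p where "p = xr*c + xs * sn"
  define q where "q = xs*c - xr * sn"
  define C where "C = c^2 - sn^2"
  define S where "S = 2 * sn * c"
  have id0: "f^2 + ((e*xs) * c - (f + e*xr) * sn)^2 - ((f + e*xr) * c + (e*xs) * sn)^2
     = 2*f^2* sn^2 - 2*e*f*(xr*C + xs*S) + e^2*(q^2-p^2) + f^2*(1 - c^2 - sn^2)"
    unfolding p_def q_def C_def S_def power2_eq_square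
    by algebra
  have id: "f^2 + ((e*xs) * c - (f + e*xr) * sn)^2 - ((f + e*xr) * c + (e*xs) * sn)^2
     = 2*f^2* sn^2 - 2*e*f*(xr*C + xs*S) + e^2*(q^2-p^2)"
    using id0 cs by simp
  have CS0: "C^2 + S^2 = (c^2+sn^2)^2" unfolding C_def S_def
    by (simp add: algebra_simps power2_eq_square)
  have CS1: "C^2 + S^2 = 1" using CS0 cs by simp
  have pq0: "p^2 + q^2 = (xr^2+xs^2) * (c^2+sn^2)" unfolding p_def q_def
    by (simp add: algebra_simps power2_eq_square)
  have pq: "p^2 + q^2 = xr^2+xs^2" using pq0 cs by simp
  have cs2: "(xr*C + xs*S)^2 + (xr*S - xs*C)^2 = (xr^2+xs^2)*(C^2+S^2)"
    by (simp add: algebra_simps power2_eq_square)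
  have "(xr*C + xs*S)^2 \<le> (xr^2+xs^2)"
  proof -
    have "(xr*C + xs*S)^2 + (xr*S - xs*C)^2 = xr^2+xs^2" using cs2 CS1 by simp
    then show ?thesis using zero_le_power2[of "xr*S - xs*C"] by linarith
  qed
  then have "\<bar>xr*C + xs*S\<bar> \<le> sqrt (xr^2+xs^2)"
    by (simp add: real_le_rsqrt)
  then have t2: "\<bar>2*e*f*(xr*C + xs*S)\<bar> \<le> 2*e*\<bar>f\<bar> * sqrt (xr^2+xs^2)"
    using e by (simp add: abs_mult mult_left_mono)
  have "\<bar>q^2-p^2\<bar> \<le> xr^2+xs^2" using pq zero_le_power2[of p] zero_le_power2[of q]
    unfolding abs_le_iff by linarith
  then have t3: "\<bar>e^2*(q^2-p^2)\<bar> \<le> e^2*(xr^2+xs^2)"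
    by (simp add: abs_mult mult_left_mono)
  show ?thesis unfolding id using t2 t3
    by (smt (verit) zero_le_power2 mult_nonneg_nonneg)
qed

lemma keyN:
  fixes y \<beta> :: real and N :: nat
  assumes y: "y > 0" and \<beta>: "\<beta> > 1" and Nd: "N = nat \<lfloor>y powr (-1/(2*\<beta>+1))\<rfloor>" and N1: "N \<ge> 1"
  shows "y \<le> real N powr (-(2*\<beta>+1))"
proof -
  have z0: "0 \<le> y powr (-1/(2*\<beta>+1))" by simp
  have "real N = max 0 (real_of_int \<lfloor>y powr (-1/(2*\<beta>+1))\<rfloor>)" using Nd by (simp only: real_nat)
  then have "real N \<le> y powr (-1/(2*\<beta>+1))" using z0 of_int_floor_le[of "y powr (-1/(2*\<beta>+1))"]
    by linarith
  then have "real N powr (2*\<beta>+1) \<le> (y powr (-1/(2*\<beta>+1))) powr (2*\<beta>+1)"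
    using \<beta> by (intro powr_mono2) auto
  also have "\<dots> = y powr (-1)" using \<beta> by (simp add: powr_powr)
  also have "\<dots> = 1 / y" using y by (simp add: powr_neg_one)
  finally have h: "real N powr (2*\<beta>+1) \<le> 1 / y" .
  have Np: "real N powr (2*\<beta>+1) > 0" using N1 by simp
  from h have "y * real N powr (2*\<beta>+1) \<le> 1" using y by (simp add: field_simps)
  moreover have "real N powr (-(2*\<beta>+1)) = 1 / real N powr (2*\<beta>+1)" by (rule powr_minus_divide)
  ultimately show ?thesis using Np by (simp add: pos_le_divide_eq mult.commute)
qed


lemma t1pw:
  fixes \<beta> :: real and N k :: nat
  assumes k: "1 \<le> k" "k \<le> N" and \<beta>: "\<beta> > 1"
  shows "(real k / real N)^2 * (2*pi*real k)^2 \<le> real N powr (2 - 2*min \<beta> 1.5) * (2*pi*real k) powr (2*\<beta>)"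
proof -
  define b where "b = min \<beta> 1.5"
  define w where "w = 2*pi*real k"
  have N0: "real N > 0" using k by simp
  have k1: "real k \<ge> 1" using k by simp
  have "real k * 1 \<le> real k * (2*pi)" using pi_gt3 by (intro mult_left_mono) auto
  then have wk: "w \<ge> real k" unfolding w_def by (simp add: mult.commute)
  have w1: "w \<ge> 1" using wk k1 by linarith
  have b: "1 < b" "b \<le> 3/2" "b \<le> \<beta>" unfolding b_def using \<beta> by auto
  have kn: "real k / real N \<le> 1" "0 < real k / real N" using k N0 by auto
  have "(real k / real N)^2 = (real k / real N) powr 2" using kn by (simp add: powr_realpow)
  also have "\<dots> \<le> (real k / real N) powr (2*b - 2)" using kn b by (intro powr_mono') auto
  also have "\<dots> \<le> (w / real N) powr (2*b-2)" using kn b wk N0 by (intro powr_mono2) (auto simp: divide_right_mono)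
  also have "\<dots> = w powr (2*b-2) / real N powr (2*b-2)" using N0 w1
    by (simp add: powr_divide)
  also have "\<dots> = real N powr (2-2*b) * w powr (2*b-2)"
  proof -
    have "real N powr (2-2*b) = 1 / real N powr (2*b-2)"
      using powr_minus_divide[of "real N" "2*b-2"] by simp
    then show ?thesis by simp
  qed
  finally have 1: "(real k / real N)^2 \<le> real N powr (2-2*b) * w powr (2*b-2)" .
  have "(real k / real N)^2 * w^2 \<le> real N powr (2-2*b) * w powr (2*b-2) * w^2"
    using 1 by (simp add: mult_right_mono)
  also have "\<dots> = real N powr (2-2*b) * w powr (2*b)"
  proof -
    have "w^2 = w powr 2" using w1 by (simp add: powr_realpow)
    moreover have "w powr (2*b-2) * w powr 2 = w powr (2*b)" by (simp add: powr_add[symmetric])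
    ultimately show ?thesis by (simp add: mult.assoc)
  qed
  also have "\<dots> \<le> real N powr (2-2*b) * w powr (2*\<beta>)" using w1 b
    by (intro mult_left_mono powr_mono) auto
  finally show ?thesis unfolding b_def w_def .
qed


lemma t2pw:
  fixes \<beta> :: real and N k :: nat
  assumes k: "1 \<le> k" "k \<le> N" and \<beta>: "\<beta> > 1"
  shows "(2*pi*real k) powr (4-2*\<beta>) \<le> 4*pi^2 * real N powr (4 - 4*min \<beta> 1.5 + 2*\<beta>)"
proof -
  define b where "b = min \<beta> 1.5"
  have b: "1 < b" "b \<le> 3/2" "b \<le> \<beta>" unfolding b_def using \<beta> by auto
  have "(2*pi*real k) powr (4-2*\<beta>) = (2*pi) powr (4-2*\<beta>) * real k powr (4-2*\<beta>)"
    using powr_mult[of "2*pi" "real k" "4-2*\<beta>"] by simp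
  also have "\<dots> \<le> 4*pi^2 * real N powr (4 - 4*b + 2*\<beta>)"
  proof (rule mult_mono)
    have "(2*pi) powr (4-2*\<beta>) \<le> (2*pi) powr 2" using \<beta> pi_gt3 by (intro powr_mono) auto
    moreover have "(2*pi) powr 2 = (2*pi)^2" by (rule powr_numeral) simp
    moreover have "((2::real)*pi)^2 = 4*pi^2" by (simp add: power_mult_distrib)
    ultimately show "(2*pi) powr (4-2*\<beta>) \<le> 4*pi^2" by simp
    show "real k powr (4-2*\<beta>) \<le> real N powr (4 - 4*b + 2*\<beta>)"
    proof (cases "4 - 2*\<beta> \<ge> 0")
      case True
      have "real k powr (4-2*\<beta>) \<le> real N powr (4-2*\<beta>)" using True k by (intro powr_mono2) auto
      also have "\<dots> \<le> real N powr (4 - 4*b + 2*\<beta>)" using k b by (intro powr_mono) auto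
      finally show ?thesis .
    next
      case False
      have "real k powr (4-2*\<beta>) \<le> real k powr 0" using False k by (intro powr_mono) auto
      then have "real k powr (4-2*\<beta>) \<le> 1" using k by simp
      also have "1 \<le> real N powr (4 - 4*b + 2*\<beta>)" using k b \<beta> by (intro ge_one_powr_ge_zero) auto
      finally show ?thesis .
    qed
  qed (auto)
  finally show ?thesis unfolding b_def .
qed


lemma rot:
  fixes f e x xs ct st cd sd :: real
  assumes "ct^2 + st^2 = 1"
  shows "(f * ct + e * x) * (ct * cd - st * sd) + (f * st + e * xs) * (st * cd + ct * sd)
          = (f + e * (x * ct + xs * st)) * cd + (e * (xs * ct - x * st)) * sd"
    and "(f * st + e * xs) * (ct * cd - st * sd) - (f * ct + e * x) * (st * cd + ct * sd)
          = (e * (xs * ct - x * st)) * cd - (f + e * (x * ct + xs * st)) * sd"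
proof -
  have "(f * ct + e * x) * (ct * cd - st * sd) + (f * st + e * xs) * (st * cd + ct * sd)
          = (f + e * (x * ct + xs * st)) * cd + (e * (xs * ct - x * st)) * sd + f * cd * (ct^2 + st^2 - 1)"
    unfolding power2_eq_square by algebra
  then show "(f * ct + e * x) * (ct * cd - st * sd) + (f * st + e * xs) * (st * cd + ct * sd)
          = (f + e * (x * ct + xs * st)) * cd + (e * (xs * ct - x * st)) * sd" using assms by simp
  have "(f * st + e * xs) * (ct * cd - st * sd) - (f * ct + e * x) * (st * cd + ct * sd)
          = (e * (xs * ct - x * st)) * cd - (f + e * (x * ct + xs * st)) * sd - f * sd * (ct^2 + st^2 - 1)"
    unfolding power2_eq_square by algebra
  then show "(f * st + e * xs) * (ct * cd - st * sd) - (f * ct + e * x) * (st * cd + ct * sd)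
          = (e * (xs * ct - x * st)) * cd - (f + e * (x * ct + xs * st)) * sd" using assms by simp
qed



theorem lemma1:
  fixes f :: "real \<Rightarrow> real" and \<theta> \<beta> \<epsilon> :: real
    and \<xi> \<xi>s :: "nat \<Rightarrow> real" and h :: "nat \<Rightarrow> real"
  assumes f_meas: "f \<in> borel_measurable lborel"
    and f_L2: "set_integrable lborel {-(1/2)..1/2} (\<lambda>t. (f t)^2)"
    and f_even: "\<And>t. f (-t) = f t"
    and f_per: "\<And>t. f (t + 1) = f t"
    and \<beta>: "\<beta> > 1"
    and f_smooth: "sob_finite \<beta> f"
    and \<epsilon>: "0 < \<epsilon>" "\<epsilon> < 1"
    and N: "N_eps \<beta> \<epsilon> \<ge> 1"
    and h01: "\<And>k. k \<in> {1..N_eps \<beta> \<epsilon>} \<Longrightarrow> 0 \<le> h k \<and> h k \<le> 1"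
    and h0: "\<And>k. k \<notin> {1..N_eps \<beta> \<epsilon>} \<Longrightarrow> h k = 0"
  shows "\<forall>\<tau>. 4*pi*\<bar>\<tau> - \<theta>\<bar> \<le> 1 / real (N_eps \<beta> \<epsilon>) \<longrightarrow>
     \<bar>deriv (deriv (Phi f \<theta> \<epsilon> \<xi> \<xi>s (N_eps \<beta> \<epsilon>) h)) \<tau>
        + (\<Sum>k\<in>{1..N_eps \<beta> \<epsilon>}. (2*pi*real k)^2 * h k * (fcoef f k)^2)\<bar>
     \<le> real (N_eps \<beta> \<epsilon>) powr (2 - 2 * min \<beta> 1.5) *
        (sob_norm \<beta> f + 2*pi*(MAX k\<in>{1..N_eps \<beta> \<epsilon>}.
            sqrt ((xi_rot \<xi> \<xi>s \<theta> k)^2 + (xi_rot_star \<xi> \<xi>s \<theta> k)^2))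
          / sqrt (ln (1 / \<epsilon>^5)))^2"
proof -
  define N where "N = N_eps \<beta> \<epsilon>"
  define L where "L = ln (1 / \<epsilon>^5)"
  define b where "b = min \<beta> 1.5"
  define P where "P = real N powr (2 - 2 * b)"
  define S where "S = sob_norm \<beta> f"
  define X where "X k = sqrt ((xi_rot \<xi> \<xi>s \<theta> k)^2 + (xi_rot_star \<xi> \<xi>s \<theta> k)^2)" for k
  define M where "M = (MAX k\<in>{1..N}. X k)"
  define F where "F k = fcoef f k" for k
  define w where "w k = 2*pi*real k" for k :: nat
  have N1: "N \<ge> 1" using N unfolding N_def .
  have Nr: "real N \<ge> 1" using N1 by simp
  have b: "1 < b" "b \<le> 3/2" "b \<le> \<beta>" unfolding b_def using \<beta> by auto
  have e5: "\<epsilon>^5 < 1" using \<epsilon> by (simp add: power_less_one_iff)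
  have "1 < 1 / \<epsilon>^5" using e5 \<epsilon> by simp
  then have L0: "L > 0" unfolding L_def by (rule ln_gt_zero)
  have y0: "\<epsilon>^2 * L > 0" using L0 \<epsilon> by simp
  have key: "\<epsilon>^2 * L \<le> real N powr (-(2*\<beta>+1))"
    by (rule keyN[OF y0 \<beta> _ N1]) (simp add: N_def N_eps_def L_def)
  have Xnn: "X k \<ge> 0" for k unfolding X_def by simp
  have XM: "X k \<le> M" if "k \<in> {1..N}" for k unfolding M_def using that by (intro Max_ge) auto
  have M0: "M \<ge> 0" using XM[of 1] Xnn[of 1] N1 by auto
  have summ: "summable (\<lambda>k. w k powr (2*\<beta>) * (F k)^2)"
    using f_smooth unfolding sob_finite_def w_def F_def .
  have sq0: "sob_sq \<beta> f \<ge> 0" unfolding sob_sq_def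
    using summ unfolding w_def F_def by (intro suminf_nonneg) auto
  have S0: "S \<ge> 0" unfolding S_def sob_norm_def using sq0 by simp
  have S2: "S^2 = sob_sq \<beta> f" unfolding S_def sob_norm_def using sq0 by simp
  have part: "(\<Sum>k\<in>{1..N}. w k powr (2*\<beta>) * (F k)^2) \<le> S^2"
    unfolding S2 sob_sq_def using summ unfolding w_def F_def by (intro sum_le_suminf) auto
  have main: "\<bar>deriv (deriv (Phi f \<theta> \<epsilon> \<xi> \<xi>s N h)) \<tau> + (\<Sum>k\<in>{1..N}. (w k)^2 * h k * (F k)^2)\<bar>
     \<le> P * (S + 2*pi*M / sqrt L)^2" if tau: "4*pi*\<bar>\<tau> - \<theta>\<bar> \<le> 1 / real N" for \<tau>
  proof -
    define d where "d = \<tau> - \<theta>"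
    define A where "A = obs f \<theta> \<epsilon> \<xi>"
    define B where "B = obs_star f \<theta> \<epsilon> \<xi>s"
    define xr where "xr = xi_rot \<xi> \<xi>s \<theta>"
    define xs where "xs = xi_rot_star \<xi> \<xi>s \<theta>"
    define c where "c k = cos (w k * d)" for k
    define sn where "sn k = sin (w k * d)" for k
    define E where "E k = (F k)^2 + ((\<epsilon> * xs k) * c k - (F k + \<epsilon> * xr k) * sn k)^2
        - ((F k + \<epsilon> * xr k) * c k + (\<epsilon> * xs k) * sn k)^2" for k
    define Y where "Y = 2*pi*M / sqrt L"
    have Phi_eq: "Phi f \<theta> \<epsilon> \<xi> \<xi>s N h = (\<lambda>t. (1/2) * (\<Sum>k\<in>{1..N}. h k *
        (A k * cos (2*pi*real k*t) + B k * sin (2*pi*real k*t))^2))"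
      by (rule ext) (simp add: Phi_def A_def B_def)
    have D: "deriv (deriv (Phi f \<theta> \<epsilon> \<xi> \<xi>s N h)) \<tau> = (\<Sum>k\<in>{1..N}. h k * (2*pi*real k)^2 *
        ((B k * cos (2*pi*real k*\<tau>) - A k * sin (2*pi*real k*\<tau>))^2
        - (A k * cos (2*pi*real k*\<tau>) + B k * sin (2*pi*real k*\<tau>))^2))"
      unfolding Phi_eq by (rule dd)
    have rk: "A k * cos (2*pi*real k*\<tau>) + B k * sin (2*pi*real k*\<tau>) = (F k + \<epsilon> * xr k) * c k + (\<epsilon> * xs k) * sn k"
         "B k * cos (2*pi*real k*\<tau>) - A k * sin (2*pi*real k*\<tau>) = (\<epsilon> * xs k) * c k - (F k + \<epsilon> * xr k) * sn k" for k
    proof -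
      have tt: "2*pi*real k*\<tau> = 2*pi*real k*\<theta> + w k * d" unfolding w_def d_def by (simp add: algebra_simps)
      have cs: "(cos (2*pi*real k*\<theta>))^2 + (sin (2*pi*real k*\<theta>))^2 = 1" by simp
      note r = rot[OF cs, where f="F k" and e=\<epsilon> and x="\<xi> k" and xs="\<xi>s k" and cd="c k" and sd="sn k"]
      show "A k * cos (2*pi*real k*\<tau>) + B k * sin (2*pi*real k*\<tau>) = (F k + \<epsilon> * xr k) * c k + (\<epsilon> * xs k) * sn k"
        unfolding tt cos_add sin_add c_def[symmetric] sn_def[symmetric]
        unfolding A_def B_def obs_def obs_star_def xr_def xs_def xi_rot_def xi_rot_star_def F_def[symmetric]
        by (rule r(1))
      show "B k * cos (2*pi*real k*\<tau>) - A k * sin (2*pi*real k*\<tau>) = (\<epsilon> * xs k) * c k - (F k + \<epsilon> * xr k) * sn k"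
        unfolding tt cos_add sin_add c_def[symmetric] sn_def[symmetric]
        unfolding A_def B_def obs_def obs_star_def xr_def xs_def xi_rot_def xi_rot_star_def F_def[symmetric]
        by (rule r(2))
    qed
    have Eb: "\<bar>E k\<bar> \<le> 2*(F k)^2*(sn k)^2 + 2*\<epsilon>*\<bar>F k\<bar> * X k + \<epsilon>^2*(X k)^2" for k
    proof -
      have cs: "(c k)^2 + (sn k)^2 = 1" unfolding c_def sn_def by simp
      have "(X k)^2 = (xr k)^2 + (xs k)^2" unfolding X_def xr_def xs_def by simp
      then show ?thesis
        using pw[where f="F k" and e=\<epsilon> and xr="xr k" and xs="xs k" and c="c k" and sn="sn k", OF cs]
          \<epsilon> unfolding E_def X_def xr_def xs_def by simp
    qed
    have sum_eq: "deriv (deriv (Phi f \<theta> \<epsilon> \<xi> \<xi>s N h)) \<tau> + (\<Sum>k\<in>{1..N}. (w k)^2 * h k * (F k)^2)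
        = (\<Sum>k\<in>{1..N}. h k * (w k)^2 * E k)"
      unfolding D rk sum.distrib[symmetric]
      by (intro sum.cong refl) (simp add: E_def w_def algebra_simps)
    define T1 where "T1 = (\<Sum>k\<in>{1..N}. (w k)^2 * (2*(F k)^2*(sn k)^2))"
    define T2 where "T2 = (\<Sum>k\<in>{1..N}. (w k)^2 * (2*\<epsilon>*\<bar>F k\<bar> * X k))"
    define T3 where "T3 = (\<Sum>k\<in>{1..N}. (w k)^2 * (\<epsilon>^2*(X k)^2))"
    have wpos: "w k > 0" if "k \<in> {1..N}" for k unfolding w_def using that by simp
    have step1: "\<bar>\<Sum>k\<in>{1..N}. h k * (w k)^2 * E k\<bar> \<le> T1 + T2 + T3"
    proof -
      have "\<bar>\<Sum>k\<in>{1..N}. h k * (w k)^2 * E k\<bar> \<le> (\<Sum>k\<in>{1..N}. \<bar>h k * (w k)^2 * E k\<bar>)"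
        by (rule sum_abs)
      also have "\<dots> \<le> (\<Sum>k\<in>{1..N}. (w k)^2 * (2*(F k)^2*(sn k)^2 + 2*\<epsilon>*\<bar>F k\<bar> * X k + \<epsilon>^2*(X k)^2))"
      proof (rule sum_mono)
        fix k assume k: "k \<in> {1..N}"
        have hk: "0 \<le> h k" "h k \<le> 1" using h01[of k] k unfolding N_def by auto
        have "\<bar>h k * (w k)^2 * E k\<bar> = h k * ((w k)^2 * \<bar>E k\<bar>)" using hk by (simp add: abs_mult)
        also have "\<dots> \<le> 1 * ((w k)^2 * (2*(F k)^2*(sn k)^2 + 2*\<epsilon>*\<bar>F k\<bar> * X k + \<epsilon>^2*(X k)^2))"
          using hk Eb[of k] by (intro mult_mono) (auto intro: mult_left_mono)
        finally show "\<bar>h k * (w k)^2 * E k\<bar> \<le> (w k)^2 * (2*(F k)^2*(sn k)^2 + 2*\<epsilon>*\<bar>F k\<bar> * X k + \<epsilon>^2*(X k)^2)"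
          by simp
      qed
      also have "\<dots> = T1 + T2 + T3" unfolding T1_def T2_def T3_def
        by (simp add: sum.distrib[symmetric] distrib_left)
      finally show ?thesis .
    qed
    have T1b: "T1 \<le> P * S^2"
    proof -
      have "T1 \<le> (\<Sum>k\<in>{1..N}. P * (w k powr (2*\<beta>) * (F k)^2))"
        unfolding T1_def
      proof (rule sum_mono)
        fix k assume k: "k \<in> {1..N}"
        have k1: "1 \<le> k" "k \<le> N" using k by auto
        have "\<bar>w k * d\<bar> = real k / 2 * (4*pi*\<bar>d\<bar>)" unfolding w_def by (simp add: abs_mult)
        also have "\<dots> \<le> real k / 2 * (1 / real N)" using tau unfolding d_def
          by (intro mult_left_mono) auto
        finally have wd: "\<bar>w k * d\<bar> \<le> real k / (2 * real N)" by simp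
        have "\<bar>sn k\<bar> \<le> real k / (2 * real N)" unfolding sn_def
          using abs_sin_x_le_abs_x[of "w k * d"] wd by linarith
        then have "(sn k)^2 \<le> (real k / (2 * real N))^2"
          by (metis abs_ge_zero abs_le_square_iff abs_of_nonneg divide_nonneg_nonneg of_nat_0_le_iff
              mult_nonneg_nonneg zero_le_numeral abs_abs power2_abs)
        also have "\<dots> = (real k / real N)^2 / 4" by (simp add: power_divide power_mult_distrib)
        finally have "(sn k)^2 \<le> (real k / real N)^2 / 4" .
        then have s2: "2 * (sn k)^2 \<le> (real k / real N)^2" using zero_le_power2[of "sn k"] by linarith
        have "(w k)^2 * (2*(F k)^2*(sn k)^2) = (2 * (sn k)^2) * ((w k)^2 * (F k)^2)" by (simp add: algebra_simps)
        also have "\<dots> \<le> (real k / real N)^2 * ((w k)^2 * (F k)^2)"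
          using s2 by (intro mult_right_mono) auto
        also have "\<dots> = ((real k / real N)^2 * (w k)^2) * (F k)^2" by (simp add: algebra_simps)
        also have "\<dots> \<le> (P * w k powr (2*\<beta>)) * (F k)^2"
          using t1pw[OF k1 \<beta>] unfolding P_def b_def w_def by (intro mult_right_mono) auto
        finally show "(w k)^2 * (2*(F k)^2*(sn k)^2) \<le> P * (w k powr (2*\<beta>) * (F k)^2)" by (simp add: algebra_simps)
      qed
      also have "\<dots> = P * (\<Sum>k\<in>{1..N}. w k powr (2*\<beta>) * (F k)^2)" by (simp add: sum_distrib_left)
      also have "\<dots> \<le> P * S^2" using part unfolding P_def by (intro mult_left_mono) auto
      finally show ?thesis .
    qed
    define G where "G = (\<Sum>k\<in>{1..N}. (w k)^2 * \<bar>F k\<bar>)"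
    define Q where "Q = (\<Sum>k\<in>{1..N}. w k powr (4 - 2*\<beta>))"
    have G0: "G \<ge> 0" unfolding G_def by (intro sum_nonneg) auto
    have Q0: "Q \<ge> 0" unfolding Q_def by (intro sum_nonneg) auto
    have T2a: "T2 \<le> 2 * M * (\<epsilon> * G)"
    proof -
      have "T2 \<le> (\<Sum>k\<in>{1..N}. (2*\<epsilon>*M) * ((w k)^2 * \<bar>F k\<bar>))" unfolding T2_def
      proof (rule sum_mono)
        fix k assume k: "k \<in> {1..N}"
        have "(w k)^2 * (2*\<epsilon>*\<bar>F k\<bar> * X k) \<le> (w k)^2 * (2*\<epsilon>*\<bar>F k\<bar> * M)"
          using XM[OF k] \<epsilon> by (intro mult_left_mono) auto
        also have "\<dots> = (2*\<epsilon>*M) * ((w k)^2 * \<bar>F k\<bar>)" by (simp only: ac_simps)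
        finally show "(w k)^2 * (2*\<epsilon>*\<bar>F k\<bar> * X k) \<le> (2*\<epsilon>*M) * ((w k)^2 * \<bar>F k\<bar>)" .
      qed
      also have "\<dots> = 2 * M * (\<epsilon> * G)" unfolding G_def by (simp add: sum_distrib_left algebra_simps)
      finally show ?thesis .
    qed
    have CS: "G^2 \<le> S^2 * Q"
    proof -
      have Geq: "G = (\<Sum>k\<in>{1..N}. (w k powr \<beta> * \<bar>F k\<bar>) * (w k powr (2 - \<beta>)))" unfolding G_def
      proof (intro sum.cong refl)
        fix k assume k: "k \<in> {1..N}"
        have "w k powr \<beta> * w k powr (2 - \<beta>) = w k powr (\<beta> + (2 - \<beta>))" by (rule powr_add[symmetric])
        also have "\<beta> + (2 - \<beta>) = 2" by simp
        also have "w k powr 2 = (w k)^2" using wpos[OF k] by (simp add: powr_numeral)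
        finally show "(w k)^2 * \<bar>F k\<bar> = (w k powr \<beta> * \<bar>F k\<bar>) * (w k powr (2 - \<beta>))"
          by (simp add: algebra_simps)
      qed
      have "G^2 \<le> (\<Sum>k\<in>{1..N}. (w k powr \<beta> * \<bar>F k\<bar>)^2) * (\<Sum>k\<in>{1..N}. (w k powr (2 - \<beta>))^2)"
        unfolding Geq by (rule Cauchy_Schwarz_ineq_sum)
      also have "\<dots> = (\<Sum>k\<in>{1..N}. w k powr (2*\<beta>) * (F k)^2) * Q" unfolding Q_def
      proof -
        have e1: "(w k powr \<beta> * \<bar>F k\<bar>)^2 = w k powr (2*\<beta>) * (F k)^2" for k
        proof -
          have "(w k powr \<beta>)^2 = w k powr (\<beta> + \<beta>)"
            by (simp only: power2_eq_square powr_add)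
          also have "\<beta> + \<beta> = 2*\<beta>" by simp
          finally have "(w k powr \<beta>)^2 = w k powr (2*\<beta>)" .
          then show ?thesis by (simp add: power_mult_distrib)
        qed
        have e2: "(w k powr (2 - \<beta>))^2 = w k powr (4 - 2*\<beta>)" for k
        proof -
          have "(w k powr (2 - \<beta>))^2 = w k powr ((2 - \<beta>) + (2 - \<beta>))"
            by (simp only: power2_eq_square powr_add)
          also have "(2 - \<beta>) + (2 - \<beta>) = 4 - 2*\<beta>" by simp
          finally show ?thesis .
        qed
        show "(\<Sum>k\<in>{1..N}. (w k powr \<beta> * \<bar>F k\<bar>)^2) * (\<Sum>k\<in>{1..N}. (w k powr (2 - \<beta>))^2)
            = (\<Sum>k\<in>{1..N}. w k powr (2*\<beta>) * (F k)^2) * (\<Sum>k\<in>{1..N}. w k powr (4 - 2*\<beta>))"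
          by (simp only: e1 e2)
      qed
      also have "\<dots> \<le> S^2 * Q" using part Q0 by (intro mult_right_mono) auto
      finally show ?thesis .
    qed
    have Qb: "\<epsilon>^2 * L * Q \<le> 4*pi^2 * P^2"
    proof -
      have "Q \<le> (\<Sum>k\<in>{1..N}. 4*pi^2 * real N powr (4 - 4*b + 2*\<beta>))" unfolding Q_def
        using t2pw[OF _ _ \<beta>] unfolding w_def b_def by (intro sum_mono) auto
      also have "\<dots> = real N * (4*pi^2 * real N powr (4 - 4*b + 2*\<beta>))" by simp
      finally have Qle: "Q \<le> real N * (4*pi^2 * real N powr (4 - 4*b + 2*\<beta>))" .
      have "\<epsilon>^2 * L * Q \<le> real N powr (-(2*\<beta>+1)) * (real N * (4*pi^2 * real N powr (4 - 4*b + 2*\<beta>)))"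
        using key Qle Q0 y0 by (intro mult_mono) auto
      also have "\<dots> = 4*pi^2 * (real N powr (-(2*\<beta>+1)) * real N powr 1 * real N powr (4 - 4*b + 2*\<beta>))"
        using Nr by simp
      also have "real N powr (-(2*\<beta>+1)) * real N powr 1 * real N powr (4 - 4*b + 2*\<beta>) = real N powr (4 - 4*b)"
        using powr_add[of "real N" "-(2*\<beta>+1) + 1" "4 - 4*b + 2*\<beta>"] powr_add[of "real N" "-(2*\<beta>+1)" 1]
        by simp
      also have "real N powr (4 - 4*b) = P^2"
      proof -
        have "P^2 = real N powr ((2 - 2*b) + (2 - 2*b))" unfolding P_def
          by (simp only: power2_eq_square powr_add)
        also have "(2 - 2*b) + (2 - 2*b) = 4 - 4*b" by simp
        finally show ?thesis by simp
      qed
      finally show ?thesis .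
    qed
    have T2b: "T2 \<le> P * (2 * S * Y)"
    proof -
      have Lsq: "(sqrt L)^2 = L" using L0 by simp
      have "(\<epsilon> * G)^2 = \<epsilon>^2 * G^2" by (simp add: power_mult_distrib)
      also have "\<dots> \<le> \<epsilon>^2 * (S^2 * Q)" using CS by (intro mult_left_mono) auto
      also have "\<dots> = S^2 * (\<epsilon>^2 * L * Q) / L" using L0 by (simp add: field_simps)
      also have "\<dots> \<le> S^2 * (4*pi^2 * P^2) / L" using Qb L0 by (intro divide_right_mono mult_left_mono) auto
      also have "\<dots> = (2*pi*S*P / sqrt L)^2" using Lsq by (simp add: power_divide power_mult_distrib)
      finally have "(\<epsilon> * G)^2 \<le> (2*pi*S*P / sqrt L)^2" .
      then have eG: "\<epsilon> * G \<le> 2*pi*S*P / sqrt L"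
      proof (rule power2_le_imp_le)
        have P0: "P \<ge> 0" unfolding P_def by simp
        show "0 \<le> 2*pi*S*P / sqrt L" using S0 P0 L0 by simp
      qed
      have "T2 \<le> 2 * M * (\<epsilon> * G)" by (rule T2a)
      also have "\<dots> \<le> 2 * M * (2*pi*S*P / sqrt L)" using eG M0 by (intro mult_left_mono) auto
      also have "\<dots> = P * (2 * S * Y)" unfolding Y_def by (simp add: algebra_simps)
      finally show ?thesis .
    qed
    have T3b: "T3 \<le> P * Y^2"
    proof -
      have "T3 \<le> (\<Sum>k\<in>{1..N}. (2*pi*real N)^2 * (\<epsilon>^2 * M^2))" unfolding T3_def
      proof (rule sum_mono)
        fix k assume k: "k \<in> {1..N}"
        have "w k \<le> 2*pi*real N" unfolding w_def using k by auto
        then have w2: "(w k)^2 \<le> (2*pi*real N)^2" using wpos[OF k] by (intro power_mono) auto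
        have XM2: "(X k)^2 \<le> M^2" using XM[OF k] Xnn[of k] by (intro power_mono) auto
        then have "\<epsilon>^2 * (X k)^2 \<le> \<epsilon>^2 * M^2" by (intro mult_left_mono) auto
        then show "(w k)^2 * (\<epsilon>^2 * (X k)^2) \<le> (2*pi*real N)^2 * (\<epsilon>^2 * M^2)"
          using w2 XM2 by (intro mult_mono) auto
      qed
      also have "\<dots> = 4*pi^2 * M^2 * (\<epsilon>^2 * real N ^ 3)"
        by (simp add: power_mult_distrib power3_eq_cube power2_eq_square algebra_simps)
      also have "\<dots> \<le> 4*pi^2 * M^2 * (P / L)"
      proof (rule mult_left_mono)
        have "\<epsilon>^2 * L * real N ^ 3 \<le> real N powr (-(2*\<beta>+1)) * real N ^ 3"
          using key by (intro mult_right_mono) auto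
        also have "real N ^ 3 = real N powr 3" using Nr by (simp add: powr_numeral)
        also have "real N powr (-(2*\<beta>+1)) * real N powr 3 = real N powr (-(2*\<beta>+1) + 3)"
          by (rule powr_add[symmetric])
        also have "-(2*\<beta>+1) + 3 = 2 - 2*\<beta>" by simp
        also have "real N powr (2 - 2*\<beta>) \<le> P" unfolding P_def using Nr b by (intro powr_mono) auto
        finally have "\<epsilon>^2 * L * real N powr 3 \<le> P" .
        then have "\<epsilon>^2 * L * real N ^ 3 \<le> P" using Nr by (simp add: powr_numeral)
        then show "\<epsilon>^2 * real N ^ 3 \<le> P / L" using L0 by (simp add: field_simps)
      qed auto
      also have "\<dots> = P * Y^2" unfolding Y_def using L0
        by (simp add: power_divide power_mult_distrib)
      finally show ?thesis .
    qed
    have "\<bar>deriv (deriv (Phi f \<theta> \<epsilon> \<xi> \<xi>s N h)) \<tau> + (\<Sum>k\<in>{1..N}. (w k)^2 * h k * (F k)^2)\<bar>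
        \<le> P * S^2 + P * (2 * S * Y) + P * Y^2"
      unfolding sum_eq using step1 T1b T2b T3b by linarith
    also have "\<dots> = P * (S + Y)^2" by (simp add: power2_sum algebra_simps)
    finally show ?thesis unfolding Y_def .
  qed

  show ?thesis using main unfolding N_def L_def P_def S_def M_def X_def F_def w_def b_def by simp
qed

end
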